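(* Let $\ell,r\in\mathcal{D}[0,\infty)$ with $\ell\le r$, let $c_0,c_0'\in\mathbb{R}$ and $\psi,\psi'\in\mathcal{D}[0,\infty)$, and suppose $(\phi,\eta)$ and $(\phi',\eta')$ solve the ESP on $[\ell(\cdot),r(\cdot)]$ for $c_0+\psi$ and $c_0'+\psi'$, respectively. If $\psi=\psi'+\nu$ for some non-decreasing $\nu\in\mathcal{D}[0,\infty)$ with $\nu(0)=0$, then for each $t\ge0$: (1) $\big[-[c_0-c_0']^+-\nu(t)\big]\vee\big[-(r(t)-\ell(t))\big]\le\phi'(t)-\phi(t)\le[c_0'-c_0]^+\wedge[r(t)-\ell(t)]$; (2) $\eta(t)-[c_0'-c_0]^+\le\eta'(t)\le\eta(t)+\nu(t)+[c_0-c_0']^+$.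
   Context: $\mathcal{D}[0,\infty)$ denotes the càdlàg functions $[0,\infty)\to(-\infty,\infty)$; $a\wedge b=\min\{a,b\}$, $a\vee b=\max\{a,b\}$, $a^+=a\vee0$. ESP: $(\phi,\eta)\in\mathcal{D}[0,\infty)^2$ solves the ESP on $[\ell(\cdot),r(\cdot)]$ for $\psi$ if (1) $\phi(t)=\psi(t)+\eta(t)\in[\ell(t),r(t)]$ for all $t\ge0$; (2) for all $0\le s\le t$: $\eta(t)-\eta(s)\ge0$ if $\phi(u)<r(u)$ for all $u\in(s,t]$, and $\eta(t)-\eta(s)\le0$ if $\phi(u)>\ell(u)$ for all $u\in(s,t]$; (3) for all $t\ge0$: $\eta(t)-\eta(t-)\ge0$ if $\phi(t)<r(t)$, and $\eta(t)-\eta(t-)\le0$ if $\phi(t)>\ell(t)$, where $\eta(0-)=0$. *)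

theory Defs
  imports "HOL-Analysis.Analysis"
begin

text \<open>Cadlag functions on [0,infinity) to the reals, represented as functions real => real;
  values at negative arguments are irrelevant.\<close>
definition cadlag :: "(real \<Rightarrow> real) \<Rightarrow> bool" where
  "cadlag f \<longleftrightarrow> (\<forall>t\<ge>0. continuous (at_right t) f) \<and>
                 (\<forall>t>0. \<exists>L. (f \<longlongrightarrow> L) (at_left t))"

text \<open>Left limit f(t-), with the convention f(0-) = 0.\<close>
definition left_lim :: "(real \<Rightarrow> real) \<Rightarrow> real \<Rightarrow> real" where
  "left_lim f t = (if t = 0 then 0 else Lim (at_left t) f)"

definition ESP :: "(real \<Rightarrow> real) \<Rightarrow> (real \<Rightarrow> real) \<Rightarrow> (real \<Rightarrow> real) \<Rightarrow> (real \<Rightarrow> real)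
                   \<Rightarrow> (real \<Rightarrow> real) \<Rightarrow> bool" where
  "ESP l r psi phi eta \<longleftrightarrow>
     cadlag phi \<and> cadlag eta \<and>
     (\<forall>t\<ge>0. phi t = psi t + eta t \<and> l t \<le> phi t \<and> phi t \<le> r t) \<and>
     (\<forall>s t. 0 \<le> s \<and> s \<le> t \<longrightarrow>
        ((\<forall>u\<in>{s<..t}. phi u < r u) \<longrightarrow> eta t - eta s \<ge> 0) \<and>
        ((\<forall>u\<in>{s<..t}. phi u > l u) \<longrightarrow> eta t - eta s \<le> 0)) \<and>
     (\<forall>t\<ge>0. (phi t < r t \<longrightarrow> eta t - left_lim eta t \<ge> 0) \<and>
             (phi t > l t \<longrightarrow> eta t - left_lim eta t \<le> 0))"

definition pos_part :: "real \<Rightarrow> real" where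
  "pos_part a = max a 0"

end

theory Submission
  imports Defs
begin

lemma key:
  fixes l r psi1 psi2 phi1 eta1 phi2 eta2 w :: "real \<Rightarrow> real" and k a t :: real
  assumes E1: "ESP l r psi1 phi1 eta1" and E2: "ESP l r psi2 phi2 eta2"
    and wc: "cadlag w" and wm: "mono_on {0..} w" and w0: "w 0 = 0"
    and ka: "k \<le> a"
    and imp: "\<forall>u\<ge>0. k + eta2 u - eta1 u - w u > a \<longrightarrow> phi2 u > phi1 u"
    and t: "t \<ge> 0"
  shows "k + eta2 t - eta1 t - w t \<le> a"
proof -
  define G where "G u = k + eta2 u - eta1 u - w u" for u
  from E1 have c1: "cadlag eta1" and b1: "\<forall>t\<ge>0. l t \<le> phi1 t \<and> phi1 t \<le> r t"
    and m1: "\<forall>s t. 0 \<le> s \<and> s \<le> t \<longrightarrow> ((\<forall>u\<in>{s<..t}. phi1 u < r u) \<longrightarrow> eta1 t - eta1 s \<ge> 0)"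
    and j1: "\<forall>t\<ge>0. (phi1 t < r t \<longrightarrow> eta1 t - left_lim eta1 t \<ge> 0)"
    unfolding ESP_def by auto
  from E2 have c2: "cadlag eta2" and b2: "\<forall>t\<ge>0. l t \<le> phi2 t \<and> phi2 t \<le> r t"
    and m2: "\<forall>s t. 0 \<le> s \<and> s \<le> t \<longrightarrow> ((\<forall>u\<in>{s<..t}. phi2 u > l u) \<longrightarrow> eta2 t - eta2 s \<le> 0)"
    and j2: "\<forall>t\<ge>0. (phi2 t > l t \<longrightarrow> eta2 t - left_lim eta2 t \<le> 0)"
    unfolding ESP_def by auto
  have pos: "phi2 u > l u \<and> phi1 u < r u" if "u \<ge> 0" "G u > a" for u
    using imp b1 b2 that unfolding G_def by force
  have G0: "G 0 \<le> a"
  proof (rule ccontr)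
    assume "\<not> G 0 \<le> a"
    then have "G 0 > a" by simp
    from pos[OF _ this] j1 j2 have "eta1 0 \<ge> 0" "eta2 0 \<le> 0"
      by (auto simp: left_lim_def)
    then have "G 0 \<le> k" using w0 by (simp add: G_def)
    with ka \<open>G 0 > a\<close> show False by simp
  qed
  define S where "S = {u \<in> {0..t}. G u \<le> a}"
  define s where "s = Sup S"
  have S0: "0 \<in> S" using G0 t by (simp add: S_def)
  have Sne: "S \<noteq> {}" using S0 by blast
  have Sbdd: "bdd_above S" unfolding S_def by (rule bdd_aboveI[of _ t]) auto
  have s0: "s \<ge> 0" unfolding s_def using cSup_upper[OF S0 Sbdd] .
  have st: "s \<le> t" unfolding s_def by (rule cSup_least[OF Sne]) (auto simp: S_def)
  have gt: "G u > a" if "u \<in> {s<..t}" for u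
  proof (rule ccontr)
    assume "\<not> G u > a"
    then have "u \<in> S" using that s0 by (auto simp: S_def)
    then have "u \<le> s" unfolding s_def using cSup_upper[OF _ Sbdd] by blast
    with that show False by simp
  qed
  have Gts: "G t \<le> G s"
  proof -
    have "\<forall>u\<in>{s<..t}. phi1 u < r u" "\<forall>u\<in>{s<..t}. phi2 u > l u"
      using gt pos s0 by auto
    then have "eta1 t - eta1 s \<ge> 0" "eta2 t - eta2 s \<le> 0" using m1 m2 s0 st by auto
    moreover have "w s \<le> w t" using wm s0 st by (auto simp: mono_on_def)
    ultimately show ?thesis by (simp add: G_def)
  qed
  show ?thesis
  proof (rule ccontr)
    assume "\<not> ?thesis"
    then have "G t > a" by (simp add: G_def)
    with Gts have Gs: "G s > a" by simp
    with G0 s0 have sp: "s > 0" by (cases "s = 0") auto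
    from c1 sp obtain L1 where L1: "(eta1 \<longlongrightarrow> L1) (at_left s)" unfolding cadlag_def by blast
    from c2 sp obtain L2 where L2: "(eta2 \<longlongrightarrow> L2) (at_left s)" unfolding cadlag_def by blast
    from wc sp obtain Lw where Lw: "(w \<longlongrightarrow> Lw) (at_left s)" unfolding cadlag_def by blast
    have ll1: "left_lim eta1 s = L1" using sp L1 by (simp add: left_lim_def tendsto_Lim)
    have ll2: "left_lim eta2 s = L2" using sp L2 by (simp add: left_lim_def tendsto_Lim)
    have "eventually (\<lambda>u. u \<in> {0<..<s}) (at_left s)" using eventually_at_left_real[OF sp] .
    then have "eventually (\<lambda>u. w u \<le> w s) (at_left s)"
      by eventually_elim (use wm in \<open>auto simp: mono_on_def\<close>)
    then have Lws: "Lw \<le> w s" using tendsto_upperbound[OF Lw] by simp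
    have "eta1 s - L1 \<ge> 0" "eta2 s - L2 \<le> 0" using j1 j2 pos[OF s0 Gs] s0 ll1 ll2 by auto
    then have "G s \<le> k + L2 - L1 - Lw" using Lws by (simp add: G_def)
    with Gs have aL: "a < k + L2 - L1 - Lw" by simp
    have "(G \<longlongrightarrow> k + L2 - L1 - Lw) (at_left s)"
      unfolding G_def by (intro tendsto_intros L1 L2 Lw)
    from order_tendstoD(1)[OF this aL] have "eventually (\<lambda>u. G u > a) (at_left s)" .
    then obtain b where b: "b < s" "\<And>y. b < y \<Longrightarrow> y < s \<Longrightarrow> G y > a"
      unfolding eventually_at_left_field by blast
    have "b < s" by fact
    then obtain u where u: "u \<in> S" "b < u" unfolding s_def using less_cSup_iff[OF Sne Sbdd] by blast
    have "u \<le> s" unfolding s_def using cSup_upper[OF u(1) Sbdd] .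
    moreover have "u \<noteq> s" using u(1) Gs by (auto simp: S_def)
    ultimately have "G u > a" using b u by simp
    with u(1) show False by (simp add: S_def)
  qed
qed

theorem proposition3p4:
  fixes l r psi psi' phi eta phi' eta' nu :: "real \<Rightarrow> real" and c0 c0' :: real
  assumes "cadlag l" and "cadlag r" and "\<forall>t\<ge>0. l t \<le> r t"
    and "cadlag psi" and "cadlag psi'"
    and "ESP l r (\<lambda>t. c0 + psi t) phi eta"
    and "ESP l r (\<lambda>t. c0' + psi' t) phi' eta'"
    and "cadlag nu" and "mono_on {0..} nu" and "nu 0 = 0"
    and "\<forall>t\<ge>0. psi t = psi' t + nu t"
  shows "\<forall>t\<ge>0.
     max (- pos_part (c0 - c0') - nu t) (- (r t - l t)) \<le> phi' t - phi t \<and>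
     phi' t - phi t \<le> min (pos_part (c0' - c0)) (r t - l t) \<and>
     eta t - pos_part (c0' - c0) \<le> eta' t \<and>
     eta' t \<le> eta t + nu t + pos_part (c0 - c0')"
proof (intro allI impI)
  fix t :: real assume t: "t \<ge> 0"
  have E: "ESP l r (\<lambda>t. c0 + psi t) phi eta" and E': "ESP l r (\<lambda>t. c0' + psi' t) phi' eta'"
    using assms by auto
  from E have p: "\<forall>t\<ge>0. phi t = c0 + psi t + eta t \<and> l t \<le> phi t \<and> phi t \<le> r t"
    unfolding ESP_def by auto
  from E' have p': "\<forall>t\<ge>0. phi' t = c0' + psi' t + eta' t \<and> l t \<le> phi' t \<and> phi' t \<le> r t"
    unfolding ESP_def by auto
  have nn: "\<forall>u\<ge>0. nu u \<ge> 0"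
  proof (intro allI impI)
    fix u :: real assume "u \<ge> 0"
    then show "nu u \<ge> 0" using mono_onD[OF assms(9), of 0 u] assms(10) by simp
  qed
  have z0: "cadlag (\<lambda>_. 0::real)" unfolding cadlag_def by auto
  have zm: "mono_on {0..} (\<lambda>_. 0::real)" by (auto simp: mono_on_def)
  note psi = assms(11)
  have A: "(c0' - c0) + eta' t - eta t - nu t \<le> pos_part (c0' - c0)"
  proof (rule key[OF E E' assms(8,9,10) _ _ t])
    show "c0' - c0 \<le> pos_part (c0' - c0)" by (simp add: pos_part_def)
    show "\<forall>u\<ge>0. c0' - c0 + eta' u - eta u - nu u > pos_part (c0' - c0) \<longrightarrow> phi' u > phi u"
    proof (intro allI impI)
      fix u :: real assume u: "u \<ge> 0" "c0' - c0 + eta' u - eta u - nu u > pos_part (c0' - c0)"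
      have "phi' u - phi u = c0' - c0 + eta' u - eta u - nu u" using p p' psi u(1) by simp
      moreover have "pos_part (c0' - c0) \<ge> 0" by (simp add: pos_part_def)
      ultimately show "phi' u > phi u" using u(2) by linarith
    qed
  qed
  have B: "(c0 - c0') + eta t - eta' t - 0 \<le> pos_part (c0 - c0')"
  proof (rule key[OF E' E z0 zm _ _ _ t])
    show "(\<lambda>_. 0::real) 0 = 0" by simp
    show "c0 - c0' \<le> pos_part (c0 - c0')" by (simp add: pos_part_def)
    show "\<forall>u\<ge>0. c0 - c0' + eta u - eta' u - 0 > pos_part (c0 - c0') \<longrightarrow> phi u > phi' u"
    proof (intro allI impI)
      fix u :: real assume u: "u \<ge> 0" "c0 - c0' + eta u - eta' u - 0 > pos_part (c0 - c0')"
      have "phi u - phi' u = c0 - c0' + eta u - eta' u + nu u" using p p' psi u(1) by simp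
      moreover have "pos_part (c0 - c0') \<ge> 0" by (simp add: pos_part_def)
      moreover have "nu u \<ge> 0" using nn u(1) by simp
      ultimately show "phi u > phi' u" using u(2) by linarith
    qed
  qed
  have C: "0 + eta' t - eta t - nu t \<le> pos_part (c0 - c0')"
  proof (rule key[OF E E' assms(8,9,10) _ _ t])
    show "0 \<le> pos_part (c0 - c0')" by (simp add: pos_part_def)
    show "\<forall>u\<ge>0. 0 + eta' u - eta u - nu u > pos_part (c0 - c0') \<longrightarrow> phi' u > phi u"
    proof (intro allI impI)
      fix u :: real assume u: "u \<ge> 0" "0 + eta' u - eta u - nu u > pos_part (c0 - c0')"
      have "phi' u - phi u = c0' - c0 + eta' u - eta u - nu u" using p p' psi u(1) by simp
      moreover have "pos_part (c0 - c0') \<ge> c0 - c0'" by (simp add: pos_part_def)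
      ultimately show "phi' u > phi u" using u(2) by linarith
    qed
  qed
  have D: "0 + eta t - eta' t - 0 \<le> pos_part (c0' - c0)"
  proof (rule key[OF E' E z0 zm _ _ _ t])
    show "(\<lambda>_. 0::real) 0 = 0" by simp
    show "0 \<le> pos_part (c0' - c0)" by (simp add: pos_part_def)
    show "\<forall>u\<ge>0. 0 + eta u - eta' u - 0 > pos_part (c0' - c0) \<longrightarrow> phi u > phi' u"
    proof (intro allI impI)
      fix u :: real assume u: "u \<ge> 0" "0 + eta u - eta' u - 0 > pos_part (c0' - c0)"
      have "phi u - phi' u = c0 - c0' + eta u - eta' u + nu u" using p p' psi u(1) by simp
      moreover have "pos_part (c0' - c0) \<ge> c0' - c0" by (simp add: pos_part_def)
      moreover have "nu u \<ge> 0" using nn u(1) by simp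
      ultimately show "phi u > phi' u" using u(2) by linarith
    qed
  qed
  have pt: "phi t = c0 + psi' t + nu t + eta t" "l t \<le> phi t" "phi t \<le> r t"
    using p psi t by auto
  have pt': "phi' t = c0' + psi' t + eta' t" "l t \<le> phi' t" "phi' t \<le> r t"
    using p' t by auto
  show "max (- pos_part (c0 - c0') - nu t) (- (r t - l t)) \<le> phi' t - phi t \<and>
     phi' t - phi t \<le> min (pos_part (c0' - c0)) (r t - l t) \<and>
     eta t - pos_part (c0' - c0) \<le> eta' t \<and>
     eta' t \<le> eta t + nu t + pos_part (c0 - c0')"
    unfolding max_def min_def using A B C D pt pt' by (simp only: split: if_split) linarith
qed

end
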